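(* Let $\Omega\subset\mathbb{R}^n$, $n\ge1$, be bounded open with smooth boundary, $\alpha,\beta,\gamma,\kappa>0$, $0\le\tau\le1$, and let $\mathbb{B}$ be the operator on $\mathbb{H}$ described in the context. Then $$\limsup_{|\lambda|\to\infty}\|(i\lambda I-\mathbb{B})^{-1}\|_{\mathcal{L}(\mathbb{H})}<\infty,$$ where $\lambda$ ranges over real numbers with $i\lambda$ in the resolvent set of $\mathbb{B}$.
   Context: $A=-\Delta$ on $L^2(\Omega)$ with $D(A)=H^2(\Omega)\cap H^1_0(\Omega)$; $A^s$ defined by spectral calculus, $\|\cdot\|$ the $L^2(\Omega)$ norm. $\mathbb{H}=D(A)\times D(A^{\tau/2})\times L^2(\Omega)$ with norm $\|U\|_{\mathbb{H}}^2=\beta\|Au\|^2+\beta(\|v\|^2+\gamma\|A^{\tau/2}v\|^2)+\alpha\|\theta\|^2$ for $U=(u,v,\theta)$. $\mathbb{B}(u,v,\theta)=(v,(I+\gamma A^\tau)^{-1}\{-A^2u+\alpha A\theta\},-\kappa A\theta-\beta Av)$ with domain $D(\mathbb{B})=\{U\in\mathbb{H}: v\in D(A),\ -Au+\alpha\theta\in D(A^{1-\tau/2}),\ -\kappa\theta-\beta v\in D(A)\}$, where $I+\gamma A^\tau$ is understood as the isometry $D(A^{\tau/2})\to D(A^{-\tau/2})$ given by $\langle (I+\gamma A^\tau)z_1,z_2\rangle=\langle z_1,z_2\rangle+\gamma\langle A^{\tau/2}z_1,A^{\tau/2}z_2\rangle$. $\mathbb{B}$ is the generator of the semigroup associated with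 the thermoelastic plate system $u_{tt}+\gamma(-\Delta)^\tau u_{tt}+\Delta^2u+\alpha\Delta\theta=0$, $\theta_t-\kappa\Delta\theta-\beta\Delta u_t=0$ with $u=\Delta u=\theta=0$ on $\partial\Omega$. *)

theory Defs
  imports "HOL-Analysis.Analysis"
begin

text \<open>A = -Delta (Dirichlet) on L2(Omega) is unitarily equivalent,
via an orthonormal eigenbasis (e_k), to multiplication by its eigenvalue sequence mu
on coefficient sequences.  A state U = (u,v,theta) is a triple of coefficient sequences.\<close>

type_synonym state = "(nat \<Rightarrow> complex) \<times> (nat \<Rightarrow> complex) \<times> (nat \<Rightarrow> complex)"

definition eigen_seq :: "(nat \<Rightarrow> real) \<Rightarrow> bool" where
  "eigen_seq mu \<longleftrightarrow> (\<forall>k. 0 < mu k) \<and> mono mu \<and> filterlim mu at_top sequentially"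

text \<open>Summand of the squared H-norm:
  beta |A u|^2 + beta (|v|^2 + gamma |A^(tau/2) v|^2) + alpha |theta|^2.\<close>
definition Hterm :: "(nat \<Rightarrow> real) \<Rightarrow> real \<Rightarrow> real \<Rightarrow> real \<Rightarrow> real \<Rightarrow> state \<Rightarrow> nat \<Rightarrow> real" where
  "Hterm mu alpha beta gamma tau U k =
     (case U of (u, v, th) \<Rightarrow>
        beta * (mu k)\<^sup>2 * (cmod (u k))\<^sup>2
      + beta * ((cmod (v k))\<^sup>2 + gamma * (mu k) powr tau * (cmod (v k))\<^sup>2)
      + alpha * (cmod (th k))\<^sup>2)"

text \<open>Membership in H = D(A) x D(A^(tau/2)) x L2 (also requiring each component in L2).\<close>
definition inH :: "(nat \<Rightarrow> real) \<Rightarrow> real \<Rightarrow> real \<Rightarrow> real \<Rightarrow> real \<Rightarrow> state \<Rightarrow> bool" where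
  "inH mu alpha beta gamma tau U \<longleftrightarrow>
     (case U of (u, v, th) \<Rightarrow>
        summable (\<lambda>k. (cmod (u k))\<^sup>2) \<and> summable (\<lambda>k. (mu k)\<^sup>2 * (cmod (u k))\<^sup>2)
      \<and> summable (\<lambda>k. (cmod (v k))\<^sup>2) \<and> summable (\<lambda>k. (mu k) powr tau * (cmod (v k))\<^sup>2)
      \<and> summable (\<lambda>k. (cmod (th k))\<^sup>2))"

definition Hnorm :: "(nat \<Rightarrow> real) \<Rightarrow> real \<Rightarrow> real \<Rightarrow> real \<Rightarrow> real \<Rightarrow> state \<Rightarrow> real" where
  "Hnorm mu alpha beta gamma tau U = sqrt (\<Sum>k. Hterm mu alpha beta gamma tau U k)"

text \<open>The operator B(u,v,theta) = (v, (I+gamma A^tau)^{-1}(-A^2 u + alpha A theta),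
  -kappa A theta - beta A v).\<close>
definition Bop :: "(nat \<Rightarrow> real) \<Rightarrow> real \<Rightarrow> real \<Rightarrow> real \<Rightarrow> real \<Rightarrow> real \<Rightarrow> state \<Rightarrow> state" where
  "Bop mu alpha beta gamma kappa tau U =
     (case U of (u, v, th) \<Rightarrow>
       (v,
        \<lambda>k. (- (of_real ((mu k)\<^sup>2)) * u k + of_real (alpha * mu k) * th k)
              / of_real (1 + gamma * (mu k) powr tau),
        \<lambda>k. - of_real (kappa * mu k) * th k - of_real (beta * mu k) * v k))"

text \<open>D(B): U in H, v in D(A), -Au + alpha theta in D(A^(1-tau/2)), -kappa theta - beta v in D(A).\<close>
definition domB :: "(nat \<Rightarrow> real) \<Rightarrow> real \<Rightarrow> real \<Rightarrow> real \<Rightarrow> real \<Rightarrow> real \<Rightarrow> state set" where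
  "domB mu alpha beta gamma kappa tau =
     {U. inH mu alpha beta gamma tau U \<and>
        (case U of (u, v, th) \<Rightarrow>
           summable (\<lambda>k. (mu k)\<^sup>2 * (cmod (v k))\<^sup>2)
         \<and> summable (\<lambda>k. (mu k) powr (2 - tau) *
                (cmod (- of_real (mu k) * u k + of_real alpha * th k))\<^sup>2)
         \<and> summable (\<lambda>k. (mu k)\<^sup>2 *
                (cmod (- of_real kappa * th k - of_real beta * v k))\<^sup>2))}"

definition st_scale :: "complex \<Rightarrow> state \<Rightarrow> state" where
  "st_scale z U = (case U of (u, v, th) \<Rightarrow> (\<lambda>k. z * u k, \<lambda>k. z * v k, \<lambda>k. z * th k))"

definition st_diff :: "state \<Rightarrow> state \<Rightarrow> state" where
  "st_diff U W = (case U of (u, v, th) \<Rightarrow> case W of (u', v', th') \<Rightarrow>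
      (\<lambda>k. u k - u' k, \<lambda>k. v k - v' k, \<lambda>k. th k - th' k))"

definition shifted :: "(nat \<Rightarrow> real) \<Rightarrow> real \<Rightarrow> real \<Rightarrow> real \<Rightarrow> real \<Rightarrow> real \<Rightarrow> complex \<Rightarrow> state \<Rightarrow> state" where
  "shifted mu alpha beta gamma kappa tau z U =
     st_diff (st_scale z U) (Bop mu alpha beta gamma kappa tau U)"

definition resolvent_set :: "(nat \<Rightarrow> real) \<Rightarrow> real \<Rightarrow> real \<Rightarrow> real \<Rightarrow> real \<Rightarrow> real \<Rightarrow> complex set" where
  "resolvent_set mu alpha beta gamma kappa tau =
     {z. bij_betw (shifted mu alpha beta gamma kappa tau z)
                  (domB mu alpha beta gamma kappa tau) {F. inH mu alpha beta gamma tau F}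
       \<and> (\<exists>C. \<forall>U\<in>domB mu alpha beta gamma kappa tau.
             Hnorm mu alpha beta gamma tau U
               \<le> C * Hnorm mu alpha beta gamma tau (shifted mu alpha beta gamma kappa tau z U))}"

definition resolvent :: "(nat \<Rightarrow> real) \<Rightarrow> real \<Rightarrow> real \<Rightarrow> real \<Rightarrow> real \<Rightarrow> real \<Rightarrow> complex \<Rightarrow> state \<Rightarrow> state" where
  "resolvent mu alpha beta gamma kappa tau z =
     the_inv_into (domB mu alpha beta gamma kappa tau) (shifted mu alpha beta gamma kappa tau z)"

definition resolvent_norm :: "(nat \<Rightarrow> real) \<Rightarrow> real \<Rightarrow> real \<Rightarrow> real \<Rightarrow> real \<Rightarrow> real \<Rightarrow> complex \<Rightarrow> ereal" where
  "resolvent_norm mu alpha beta gamma kappa tau z =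
     (SUP F \<in> {F. inH mu alpha beta gamma tau F \<and> Hnorm mu alpha beta gamma tau F \<noteq> 0}.
        ereal (Hnorm mu alpha beta gamma tau (resolvent mu alpha beta gamma kappa tau z F)
               / Hnorm mu alpha beta gamma tau F))"

end

theory Submission
  imports Defs
begin


lemma young: fixes x y e :: real assumes "e > 0" shows "x*y \<le> e/2*x\<^sup>2 + y\<^sup>2/(2*e)"
proof -
  have "0 \<le> (e*x - y)\<^sup>2/(2*e)" using assms by simp
  also have "\<dots> = e/2*x\<^sup>2 + y\<^sup>2/(2*e) - x*y" using assms by (simp add: field_simps power2_eq_square)
  finally show ?thesis by simp
qed

lemma pq: fixes c d p q X Y :: real
  assumes "c > 0" "d > 0" "p \<ge> 0" "q \<ge> 0" "X \<ge> 0" "Y \<ge> 0" "c*p\<^sup>2 \<le> X\<^sup>2" "d*q\<^sup>2 \<le> Y\<^sup>2"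
  shows "sqrt(c*d) * (p*q) \<le> X*Y"
proof (rule power2_le_imp_le)
  have "(sqrt(c*d) * (p*q))\<^sup>2 = (c*p\<^sup>2)*(d*q\<^sup>2)" using assms by (simp add: power_mult_distrib)
  also have "\<dots> \<le> X\<^sup>2 * Y\<^sup>2" using assms by (intro mult_mono) auto
  finally show "(sqrt(c*d) * (p*q))\<^sup>2 \<le> (X*Y)\<^sup>2" by (simp add: power_mult_distrib)
  show "0 \<le> X*Y" using assms by simp
qed

lemma pq': fixes c d p q X Y :: real
  assumes "c > 0" "d > 0" "p \<ge> 0" "q \<ge> 0" "X \<ge> 0" "Y \<ge> 0" "c*p\<^sup>2 \<le> X\<^sup>2" "d*q\<^sup>2 \<le> Y\<^sup>2"
  shows "p*q \<le> X*Y / sqrt(c*d)"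
  using pq[OF assms] assms by (simp add: field_simps)

lemma key_real:
  fixes alpha beta kappa K :: real
  assumes ab: "alpha > 0" "beta > 0" "kappa > 0" "K > 0"
  shows "\<exists>C\<ge>0. \<forall>U1 V T F1 F2 F3 X Y m w Ka :: real.
     U1 \<ge> 0 \<and> V \<ge> 0 \<and> T \<ge> 0 \<and> F1 \<ge> 0 \<and> F2 \<ge> 0 \<and> F3 \<ge> 0 \<and> X \<ge> 0 \<and> Y \<ge> 0
     \<and> m > 0 \<and> w \<ge> 0 \<and> Ka \<ge> 0 \<and> 1 \<le> K*m \<and> w\<^sup>2 \<le> K*m \<and> Ka \<le> K
     \<and> X\<^sup>2 = beta*F1\<^sup>2 + beta*F2\<^sup>2 + alpha*F3\<^sup>2 \<and> Y\<^sup>2 = beta*U1\<^sup>2 + beta*V\<^sup>2 + alpha*T\<^sup>2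
     \<and> alpha*kappa*m*T\<^sup>2 \<le> beta*(F1*U1) + beta*(F2*V) + alpha*(F3*T)
     \<and> beta*V\<^sup>2 \<le> Ka*(F3*V) + kappa*w*(T*V) + Ka*(T*F2) + T*U1 + alpha*T\<^sup>2
     \<and> U1\<^sup>2 \<le> V\<^sup>2 + Ka*(F2*U1) + Ka*(V*F1) + alpha*(T*U1)
     \<longrightarrow> Y \<le> C*X"
proof -
  define sq where "sq = sqrt(alpha*beta)"
  have sq: "sq > 0" using ab by (simp add: sq_def)
  define cT where "cT = 3*K/(alpha*kappa)"
  define c3 where "c3 = 2*K/beta + alpha\<^sup>2*cT"
  define e where "e = 3*beta/8"
  define c4 where "c4 = 2*K/sq + kappa\<^sup>2*cT/(2*beta) + (e/2)*(4/3)*c3 + cT/(2*e) + alpha*cT"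
  define CV where "CV = 4*c4/beta"
  define CU where "CU = 4/3*(CV + c3)"
  define C where "C = beta*CU + beta*CV + alpha*cT"
  have pos: "cT > 0" "c3 > 0" "e > 0" "c4 > 0" "CV > 0" "CU > 0" "C > 0"
    using ab sq by (auto simp: cT_def c3_def e_def c4_def CV_def CU_def C_def intro!: add_pos_pos divide_pos_pos mult_pos_pos)
  show ?thesis
  proof (intro exI[of _ C] conjI allI impI)
    show "C \<ge> 0" using pos by simp
    fix U1 V T F1 F2 F3 X Y m w Ka :: real
    assume H: "U1 \<ge> 0 \<and> V \<ge> 0 \<and> T \<ge> 0 \<and> F1 \<ge> 0 \<and> F2 \<ge> 0 \<and> F3 \<ge> 0 \<and> X \<ge> 0 \<and> Y \<ge> 0
     \<and> m > 0 \<and> w \<ge> 0 \<and> Ka \<ge> 0 \<and> 1 \<le> K*m \<and> w\<^sup>2 \<le> K*m \<and> Ka \<le> K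
     \<and> X\<^sup>2 = beta*F1\<^sup>2 + beta*F2\<^sup>2 + alpha*F3\<^sup>2 \<and> Y\<^sup>2 = beta*U1\<^sup>2 + beta*V\<^sup>2 + alpha*T\<^sup>2
     \<and> alpha*kappa*m*T\<^sup>2 \<le> beta*(F1*U1) + beta*(F2*V) + alpha*(F3*T)
     \<and> beta*V\<^sup>2 \<le> Ka*(F3*V) + kappa*w*(T*V) + Ka*(T*F2) + T*U1 + alpha*T\<^sup>2
     \<and> U1\<^sup>2 \<le> V\<^sup>2 + Ka*(F2*U1) + Ka*(V*F1) + alpha*(T*U1)"
    then have nn: "U1 \<ge> 0" "V \<ge> 0" "T \<ge> 0" "F1 \<ge> 0" "F2 \<ge> 0" "F3 \<ge> 0" "X \<ge> 0" "Y \<ge> 0"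
      "m > 0" "w \<ge> 0" "Ka \<ge> 0" and K1: "1 \<le> K*m" and K2: "w\<^sup>2 \<le> K*m" and K3: "Ka \<le> K"
      and hX: "X\<^sup>2 = beta*F1\<^sup>2 + beta*F2\<^sup>2 + alpha*F3\<^sup>2" and hY: "Y\<^sup>2 = beta*U1\<^sup>2 + beta*V\<^sup>2 + alpha*T\<^sup>2"
      and h1: "alpha*kappa*m*T\<^sup>2 \<le> beta*(F1*U1) + beta*(F2*V) + alpha*(F3*T)"
      and h2: "beta*V\<^sup>2 \<le> Ka*(F3*V) + kappa*w*(T*V) + Ka*(T*F2) + T*U1 + alpha*T\<^sup>2"
      and h3: "U1\<^sup>2 \<le> V\<^sup>2 + Ka*(F2*U1) + Ka*(V*F1) + alpha*(T*U1)"
      by auto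
    define D where "D = X*Y"
    have D0: "D \<ge> 0" using nn by (simp add: D_def)
    have X1: "beta*F1\<^sup>2 \<le> X\<^sup>2" "beta*F2\<^sup>2 \<le> X\<^sup>2" "alpha*F3\<^sup>2 \<le> X\<^sup>2"
      using hX ab by (auto intro: add_nonneg_nonneg)
    have Y1: "beta*U1\<^sup>2 \<le> Y\<^sup>2" "beta*V\<^sup>2 \<le> Y\<^sup>2" "alpha*T\<^sup>2 \<le> Y\<^sup>2"
      using hY ab by (auto intro: add_nonneg_nonneg)
    have sqb: "sqrt(beta*beta) = beta" "sqrt(alpha*alpha) = alpha" using ab by auto
    have b1: "beta*(F1*U1) \<le> D" using pq[OF _ _ _ _ _ _ X1(1) Y1(1)] ab nn sqb by (simp add: D_def)
    have b2: "beta*(F2*V) \<le> D" using pq[OF _ _ _ _ _ _ X1(2) Y1(2)] ab nn sqb by (simp add: D_def)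
    have b3: "alpha*(F3*T) \<le> D" using pq[OF _ _ _ _ _ _ X1(3) Y1(3)] ab nn sqb by (simp add: D_def)
    have mT: "alpha*kappa*(m*T\<^sup>2) \<le> 3*D" using h1 b1 b2 b3 by (simp add: mult.assoc)
    have T2m: "m*T\<^sup>2 \<le> 3*D/(alpha*kappa)" using mT ab by (simp add: field_simps)
    have "T\<^sup>2 = T\<^sup>2 * 1" by simp
    also have "\<dots> \<le> T\<^sup>2 * (K*m)" using K1 by (intro mult_left_mono) auto
    also have "\<dots> = K*(m*T\<^sup>2)" by simp
    also have "\<dots> \<le> K*(3*D/(alpha*kappa))" using T2m ab by (intro mult_left_mono) auto
    also have "K*(3*D/(alpha*kappa)) = cT*D" by (simp add: cT_def)
    finally have T2: "T\<^sup>2 \<le> cT*D" .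
    have "w\<^sup>2*T\<^sup>2 \<le> (K*m)*T\<^sup>2" using K2 by (intro mult_right_mono) auto
    also have "\<dots> = K*(m*T\<^sup>2)" by simp
    also have "\<dots> \<le> K*(3*D/(alpha*kappa))" using T2m ab by (intro mult_left_mono) auto
    also have "K*(3*D/(alpha*kappa)) = cT*D" by (simp add: cT_def)
    finally have saT2: "w\<^sup>2*T\<^sup>2 \<le> cT*D" .
    have sqab: "sqrt(alpha*beta) = sq" "sqrt(beta*alpha) = sq" by (simp_all add: sq_def mult.commute)
    have F3V: "F3*V \<le> D/sq" using pq'[OF _ _ _ _ _ _ X1(3) Y1(2)] ab nn sqab by (simp add: D_def)
    have TF2: "T*F2 \<le> D/sq" using pq'[OF _ _ _ _ _ _ Y1(3) X1(2)] ab nn sqab by (simp add: D_def mult.commute)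
    have F2U1: "F2*U1 \<le> D/beta" using pq'[OF _ _ _ _ _ _ X1(2) Y1(1)] ab nn sqb by (simp add: D_def)
    have VF1: "V*F1 \<le> D/beta" using pq'[OF _ _ _ _ _ _ Y1(2) X1(1)] ab nn sqb by (simp add: D_def mult.commute)
    have t1: "Ka*(F3*V) \<le> K*(D/sq)" using K3 F3V nn by (meson mult_mono order_trans mult_nonneg_nonneg zero_le_mult_iff)
    have t3: "Ka*(T*F2) \<le> K*(D/sq)" using K3 TF2 nn by (meson mult_mono order_trans mult_nonneg_nonneg zero_le_mult_iff)
    have u1: "Ka*(F2*U1) \<le> K*(D/beta)" using K3 F2U1 nn by (meson mult_mono order_trans mult_nonneg_nonneg zero_le_mult_iff)
    have u2: "Ka*(V*F1) \<le> K*(D/beta)" using K3 VF1 nn by (meson mult_mono order_trans mult_nonneg_nonneg zero_le_mult_iff)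
    have "kappa*w*(T*V) = V*(kappa*w*T)" by simp
    also have "\<dots> \<le> beta/2*V\<^sup>2 + (kappa*w*T)\<^sup>2/(2*beta)" by (rule young) (use ab in simp)
    also have "(kappa*w*T)\<^sup>2 = kappa\<^sup>2*(w\<^sup>2*T\<^sup>2)" by (simp add: power_mult_distrib)
    also have "kappa\<^sup>2*(w\<^sup>2*T\<^sup>2) \<le> kappa\<^sup>2*(cT*D)" using saT2 by (intro mult_left_mono) auto
    finally have t2: "kappa*w*(T*V) \<le> beta/2*V\<^sup>2 + kappa\<^sup>2*(cT*D)/(2*beta)" using ab by (simp add: divide_right_mono)
    have "T*U1 = U1*T" by simp
    also have "\<dots> \<le> e/2*U1\<^sup>2 + T\<^sup>2/(2*e)" by (rule young) (use pos in simp)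
    also have "T\<^sup>2/(2*e) \<le> cT*D/(2*e)" using T2 pos by (simp add: divide_right_mono)
    finally have t4: "T*U1 \<le> e/2*U1\<^sup>2 + cT*D/(2*e)" by simp
    have t5: "alpha*T\<^sup>2 \<le> alpha*(cT*D)" using T2 ab by simp
    have "alpha*(T*U1) = U1*(alpha*T)" by simp
    also have "\<dots> \<le> (1/2)/2*U1\<^sup>2 + (alpha*T)\<^sup>2/(2*(1/2))" by (rule young) simp
    also have "(alpha*T)\<^sup>2/(2*(1/2)) = alpha\<^sup>2*T\<^sup>2" by (simp add: power_mult_distrib)
    also have "alpha\<^sup>2*T\<^sup>2 \<le> alpha\<^sup>2*(cT*D)" using T2 by (intro mult_left_mono) auto
    finally have u3: "alpha*(T*U1) \<le> 1/4*U1\<^sup>2 + alpha\<^sup>2*(cT*D)" by simp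
    have c3e: "K*(D/beta) + K*(D/beta) + alpha\<^sup>2*(cT*D) = c3*D" using ab by (simp add: c3_def field_simps)
    have "3/4*U1\<^sup>2 \<le> V\<^sup>2 + c3*D" using h3 u1 u2 u3 c3e by linarith
    then have U1b: "U1\<^sup>2 \<le> 4/3*V\<^sup>2 + 4/3*(c3*D)" by simp
    have "e/2*U1\<^sup>2 \<le> e/2*(4/3*V\<^sup>2 + 4/3*(c3*D))" using U1b pos by (intro mult_left_mono) auto
    also have "\<dots> = beta/4*V\<^sup>2 + (e/2)*(4/3)*c3*D" by (simp add: e_def field_simps)
    finally have t4': "e/2*U1\<^sup>2 \<le> beta/4*V\<^sup>2 + (e/2)*(4/3)*c3*D" .
    have c4e: "K*(D/sq) + kappa\<^sup>2*(cT*D)/(2*beta) + K*(D/sq) + (e/2)*(4/3)*c3*D + cT*D/(2*e) + alpha*(cT*D) = c4*D"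
      using ab pos sq by (simp add: c4_def field_simps)
    have "beta/4*V\<^sup>2 \<le> c4*D"
      using h2 t1 t2 t3 t4 t4' t5 c4e by linarith
    then have V2: "V\<^sup>2 \<le> CV*D" using ab by (simp add: CV_def field_simps)
    have U2: "U1\<^sup>2 \<le> CU*D" using U1b V2 by (simp add: CU_def field_simps)
    have "Y\<^sup>2 \<le> beta*(CU*D) + beta*(CV*D) + alpha*(cT*D)" unfolding hY
      using U2 V2 T2 ab by (intro add_mono mult_left_mono) auto
    also have "\<dots> = C*(X*Y)" by (simp add: C_def D_def field_simps)
    finally have Y2: "Y*Y \<le> (C*X)*Y" by (simp add: power2_eq_square mult.commute mult.left_commute)
    show "Y \<le> C*X"
    proof (cases "Y = 0")
      case True then show ?thesis using pos nn by simp
    next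
      case False then have "Y > 0" using nn by simp
      then show ?thesis using Y2 by simp
    qed
  qed
qed


lemma re3: "Re (A + B + C) \<le> cmod A + cmod B + cmod C"
  using complex_Re_le_cmod[of A] complex_Re_le_cmod[of B] complex_Re_le_cmod[of C] by simp

lemma re5: "Re (A - B + C - D + E) \<le> cmod A + cmod B + cmod C + cmod D + cmod E"
proof -
  have "Re (-B) \<le> cmod B" "Re (-D) \<le> cmod D" using complex_Re_le_cmod[of "-B"] complex_Re_le_cmod[of "-D"] by auto
  then show ?thesis using complex_Re_le_cmod[of A] complex_Re_le_cmod[of C] complex_Re_le_cmod[of E] by simp
qed

lemma mode_ineqs:
  fixes u v th :: complex and m a al be ka lam :: real
  assumes a: "a > 0" and m: "m > 0" and pos: "al > 0" "be > 0" "ka > 0"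
  defines "f1 \<equiv> \<i> * of_real lam * u - v"
    and "f2 \<equiv> \<i> * of_real lam * v - (- of_real (m\<^sup>2) * u + of_real (al * m) * th) / of_real a"
    and "f3 \<equiv> \<i> * of_real lam * th - (- of_real (ka * m) * th - of_real (be * m) * v)"
  shows "al * ka * m * (cmod th)\<^sup>2 \<le> be * ((m * cmod f1) * (m * cmod u)) + be * ((sqrt a * cmod f2) * (sqrt a * cmod v)) + al * (cmod f3 * cmod th)"
    and "be * (sqrt a * cmod v)\<^sup>2 \<le> (sqrt a / m) * (cmod f3 * (sqrt a * cmod v)) + ka * sqrt a * (cmod th * (sqrt a * cmod v))
          + (sqrt a / m) * (cmod th * (sqrt a * cmod f2)) + cmod th * (m * cmod u) + al * (cmod th)\<^sup>2"
    and "(m * cmod u)\<^sup>2 \<le> (sqrt a * cmod v)\<^sup>2 + (sqrt a / m) * ((sqrt a * cmod f2) * (m * cmod u))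
          + (sqrt a / m) * ((sqrt a * cmod v) * (m * cmod f1)) + al * (cmod th * (m * cmod u))"
proof -
  have sa0: "sqrt a * sqrt a = a" using a by simp
  have sa: "sqrt a * (sqrt a * x) = a * x" for x using sa0 by (metis mult.assoc)
  have e1: "Re (of_real (be * m\<^sup>2) * f1 * cnj u + of_real (be * a) * f2 * cnj v + of_real al * f3 * cnj th)
     = al * ka * m * (cmod th)\<^sup>2"
    using a unfolding f1_def f2_def f3_def
    apply (cases u; cases v; cases th)
    apply (simp add: cmod_power2 field_simps)
    apply (simp add: algebra_simps power2_eq_square)
    done
  have e2: "be * a * (cmod v)\<^sup>2 = Re (of_real (a / m) * f3 * cnj v - of_real (ka * a) * th * cnj v
       + of_real (a / m) * th * cnj f2 - of_real m * th * cnj u + of_real al * th * cnj th)"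
    using a m unfolding f1_def f2_def f3_def
    apply (cases u; cases v; cases th)
    apply (simp add: cmod_power2 field_simps)
    apply (simp add: algebra_simps power2_eq_square)
    done
  have e3: "m\<^sup>2 * (cmod u)\<^sup>2 - a * (cmod v)\<^sup>2 = Re (of_real a * f2 * cnj u + of_real a * v * cnj f1
       + of_real (al * m) * th * cnj u)"
    using a m unfolding f1_def f2_def f3_def
    apply (cases u; cases v; cases th)
    apply (simp add: cmod_power2 field_simps)
    apply (simp add: algebra_simps power2_eq_square)
    done
  show "al * ka * m * (cmod th)\<^sup>2 \<le> be * ((m * cmod f1) * (m * cmod u)) + be * ((sqrt a * cmod f2) * (sqrt a * cmod v)) + al * (cmod f3 * cmod th)"
  proof -
    have "al * ka * m * (cmod th)\<^sup>2 \<le> be * m\<^sup>2 * cmod f1 * cmod u + be * a * cmod f2 * cmod v + al * cmod f3 * cmod th"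
      using e1 re3[of "of_real (be * m\<^sup>2) * f1 * cnj u" "of_real (be * a) * f2 * cnj v" "of_real al * f3 * cnj th"]
      using a m pos by (simp add: norm_mult norm_power norm_divide abs_mult mult.assoc)
    then show ?thesis using m a by (simp add: algebra_simps power2_eq_square sa)
  qed
  show "be * (sqrt a * cmod v)\<^sup>2 \<le> (sqrt a / m) * (cmod f3 * (sqrt a * cmod v)) + ka * sqrt a * (cmod th * (sqrt a * cmod v))
          + (sqrt a / m) * (cmod th * (sqrt a * cmod f2)) + cmod th * (m * cmod u) + al * (cmod th)\<^sup>2"
  proof -
    have "be * a * (cmod v)\<^sup>2 \<le> a / m * cmod f3 * cmod v + ka * a * cmod th * cmod v + a / m * cmod th * cmod f2 + m * cmod th * cmod u + al * cmod th * cmod th"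
      using e2 re5[of "of_real (a / m) * f3 * cnj v" "of_real (ka * a) * th * cnj v" "of_real (a / m) * th * cnj f2" "of_real m * th * cnj u" "of_real al * th * cnj th"]
      using a m pos by (simp add: norm_mult norm_power norm_divide abs_mult mult.assoc)
    then show ?thesis using m a by (simp add: algebra_simps power2_eq_square sa)
  qed
  show "(m * cmod u)\<^sup>2 \<le> (sqrt a * cmod v)\<^sup>2 + (sqrt a / m) * ((sqrt a * cmod f2) * (m * cmod u))
          + (sqrt a / m) * ((sqrt a * cmod v) * (m * cmod f1)) + al * (cmod th * (m * cmod u))"
  proof -
    have "m\<^sup>2 * (cmod u)\<^sup>2 - a * (cmod v)\<^sup>2 \<le> a * cmod f2 * cmod u + a * cmod v * cmod f1 + al * m * cmod th * cmod u"
      using e3 re3[of "of_real a * f2 * cnj u" "of_real a * v * cnj f1" "of_real (al * m) * th * cnj u"]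
      using a m pos by (simp add: norm_mult norm_power norm_divide abs_mult mult.assoc)
    then show ?thesis using m a by (simp add: algebra_simps power2_eq_square sa)
  qed
qed


lemma mode_bound:
  fixes al be ga ka tau m0 :: real
  assumes pos: "al > 0" "be > 0" "ga > 0" "ka > 0" and tau: "0 \<le> tau" "tau \<le> 1" and m0: "m0 > 0"
  shows "\<exists>C\<ge>0. \<forall>m u v th lam. m \<ge> m0 \<longrightarrow>
    be * m\<^sup>2 * (cmod u)\<^sup>2 + be * ((cmod v)\<^sup>2 + ga * m powr tau * (cmod v)\<^sup>2) + al * (cmod th)\<^sup>2
    \<le> C\<^sup>2 * (be * m\<^sup>2 * (cmod (\<i> * of_real lam * u - v))\<^sup>2
      + be * ((cmod (\<i> * of_real lam * v - (- of_real (m\<^sup>2) * u + of_real (al * m) * th) / of_real (1 + ga * m powr tau)))\<^sup>2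
         + ga * m powr tau * (cmod (\<i> * of_real lam * v - (- of_real (m\<^sup>2) * u + of_real (al * m) * th) / of_real (1 + ga * m powr tau)))\<^sup>2)
      + al * (cmod (\<i> * of_real lam * th - (- of_real (ka * m) * th - of_real (be * m) * v)))\<^sup>2)"
proof -
  define K where "K = (1 + ga) / m0 + ga"
  have K: "K > 0" unfolding K_def using pos m0 by (intro add_pos_pos divide_pos_pos) auto
  obtain C where C0: "C \<ge> 0" and C: "\<forall>U1 V T F1 F2 F3 X Y m w Ka :: real.
     U1 \<ge> 0 \<and> V \<ge> 0 \<and> T \<ge> 0 \<and> F1 \<ge> 0 \<and> F2 \<ge> 0 \<and> F3 \<ge> 0 \<and> X \<ge> 0 \<and> Y \<ge> 0
     \<and> m > 0 \<and> w \<ge> 0 \<and> Ka \<ge> 0 \<and> 1 \<le> K*m \<and> w\<^sup>2 \<le> K*m \<and> Ka \<le> K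
     \<and> X\<^sup>2 = be*F1\<^sup>2 + be*F2\<^sup>2 + al*F3\<^sup>2 \<and> Y\<^sup>2 = be*U1\<^sup>2 + be*V\<^sup>2 + al*T\<^sup>2
     \<and> al*ka*m*T\<^sup>2 \<le> be*(F1*U1) + be*(F2*V) + al*(F3*T)
     \<and> be*V\<^sup>2 \<le> Ka*(F3*V) + ka*w*(T*V) + Ka*(T*F2) + T*U1 + al*T\<^sup>2
     \<and> U1\<^sup>2 \<le> V\<^sup>2 + Ka*(F2*U1) + Ka*(V*F1) + al*(T*U1)
     \<longrightarrow> Y \<le> C*X"
    using key_real[OF pos(1) pos(2) pos(4) K] by blast
  show ?thesis
  proof (intro exI[of _ C] conjI allI impI)
    show "C \<ge> 0" by fact
    fix m lam :: real and u v th :: complex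
    assume mm: "m0 \<le> m"
    have m: "m > 0" using mm m0 by simp
    define a where "a = 1 + ga * m powr tau"
    have a: "a > 0" using pos by (simp add: a_def add_pos_nonneg)
    define f1 where "f1 = \<i> * of_real lam * u - v"
    define f2 where "f2 = \<i> * of_real lam * v - (- of_real (m\<^sup>2) * u + of_real (al * m) * th) / of_real a"
    define f3 where "f3 = \<i> * of_real lam * th - (- of_real (ka * m) * th - of_real (be * m) * v)"
    note I = mode_ineqs[OF a m pos(1) pos(2) pos(4), where lam=lam and u=u and v=v and th=th, folded f1_def f2_def f3_def]
    have mp: "m powr tau \<le> 1 + m"
    proof (cases "m \<le> 1")
      case True then have "m powr tau \<le> 1" using tau m by (intro powr_le1) auto
      then show ?thesis using m by simp
    next
      case False then have "m powr tau \<le> m powr 1" using tau by (intro powr_mono) auto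
      then show ?thesis using m by simp
    qed
    have K1: "1 \<le> K*m"
    proof -
      have "1 \<le> m / m0" using mm m0 by simp
      also have "\<dots> \<le> (1 + ga) / m0 * m" using pos m0 m by (simp add: field_simps)
      also have "\<dots> \<le> K * m" using pos m by (simp add: K_def field_simps)
      finally show ?thesis .
    qed
    have gm: "ga*m0 \<le> ga*m" using mm pos by (simp add: mult_left_mono)
    have K2: "a \<le> K*m"
    proof -
      have "a \<le> 1 + ga * (1 + m)" using mp pos by (simp add: a_def)
      also have "\<dots> = (1 + ga) + ga * m" by (simp add: algebra_simps)
      also have "\<dots> \<le> (1 + ga) * (m / m0) + ga * m"
      proof -
        have "1 \<le> m/m0" using mm m0 by simp
        then have "(1+ga)*1 \<le> (1+ga)*(m/m0)" using pos by (intro mult_left_mono) auto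
        then show ?thesis by simp
      qed
      also have "\<dots> = K * m" by (simp add: K_def field_simps)
      finally show ?thesis .
    qed
    have sa2: "(sqrt a)\<^sup>2 = a" using a by simp
    have K3: "sqrt a / m \<le> K"
    proof -
      have "(K*m)*1 \<le> (K*m)*(K*m)" using K1 by (intro mult_left_mono) auto
      then have "a \<le> (K*m)\<^sup>2" using K2 by (simp add: power2_eq_square)
      then have "sqrt a \<le> sqrt ((K*m)\<^sup>2)" by (rule real_sqrt_le_mono)
      then have "sqrt a \<le> K*m" using K m by simp
      then show ?thesis using m by (simp add: field_simps)
    qed
    define Xs where "Xs = be*(m * cmod f1)\<^sup>2 + be*(sqrt a * cmod f2)\<^sup>2 + al*(cmod f3)\<^sup>2"
    define Ys where "Ys = be*(m * cmod u)\<^sup>2 + be*(sqrt a * cmod v)\<^sup>2 + al*(cmod th)\<^sup>2"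
    have Xs0: "Xs \<ge> 0" using pos by (simp add: Xs_def)
    have Ys0: "Ys \<ge> 0" using pos by (simp add: Ys_def)
    have "sqrt Ys \<le> C * sqrt Xs"
      using C[rule_format, of "m * cmod u" "sqrt a * cmod v" "cmod th" "m * cmod f1" "sqrt a * cmod f2" "cmod f3"
          "sqrt Xs" "sqrt Ys" m "sqrt a" "sqrt a / m"]
      using I m a K1 K3 Xs0 Ys0 sa2 K2 unfolding Xs_def Ys_def by simp
    then have "(sqrt Ys)\<^sup>2 \<le> (C * sqrt Xs)\<^sup>2" using Ys0 by (intro power_mono) auto
    then have "Ys \<le> C\<^sup>2 * Xs" using Xs0 Ys0 by (simp add: power_mult_distrib)
    then show "be * m\<^sup>2 * (cmod u)\<^sup>2 + be * ((cmod v)\<^sup>2 + ga * m powr tau * (cmod v)\<^sup>2) + al * (cmod th)\<^sup>2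
    \<le> C\<^sup>2 * (be * m\<^sup>2 * (cmod (\<i> * of_real lam * u - v))\<^sup>2
      + be * ((cmod (\<i> * of_real lam * v - (- of_real (m\<^sup>2) * u + of_real (al * m) * th) / of_real (1 + ga * m powr tau)))\<^sup>2
         + ga * m powr tau * (cmod (\<i> * of_real lam * v - (- of_real (m\<^sup>2) * u + of_real (al * m) * th) / of_real (1 + ga * m powr tau)))\<^sup>2)
      + al * (cmod (\<i> * of_real lam * th - (- of_real (ka * m) * th - of_real (be * m) * v)))\<^sup>2)"
      unfolding Xs_def Ys_def f1_def f2_def f3_def a_def
      using a by (simp add: power_mult_distrib algebra_simps a_def)
  qed
qed

lemma summ_H:
  assumes "inH mu al be ga tau F"
  shows "summable (Hterm mu al be ga tau F)"
proof -
  obtain f1 f2 f3 where F: "F = (f1, f2, f3)" by (cases F) auto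
  have s: "summable (\<lambda>k. (cmod (f1 k))\<^sup>2)" "summable (\<lambda>k. (mu k)\<^sup>2 * (cmod (f1 k))\<^sup>2)"
      "summable (\<lambda>k. (cmod (f2 k))\<^sup>2)" "summable (\<lambda>k. (mu k) powr tau * (cmod (f2 k))\<^sup>2)"
      "summable (\<lambda>k. (cmod (f3 k))\<^sup>2)"
    using assms by (auto simp: inH_def F)
  have eq: "Hterm mu al be ga tau F = (\<lambda>k. be * ((mu k)\<^sup>2 * (cmod (f1 k))\<^sup>2)
      + (be * (cmod (f2 k))\<^sup>2 + (be * ga) * ((mu k) powr tau * (cmod (f2 k))\<^sup>2)) + al * (cmod (f3 k))\<^sup>2)"
    by (auto simp: Hterm_def F algebra_simps)
  show ?thesis unfolding eq
    by (intro summable_add summable_mult s)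
qed

lemma Hnorm_bound:
  fixes C :: real
  assumes C0: "C \<ge> 0" and inHU: "inH mu alpha beta gamma tau U" and inHF: "inH mu alpha beta gamma tau F"
    and le: "\<And>k. Hterm mu alpha beta gamma tau U k \<le> C\<^sup>2 * Hterm mu alpha beta gamma tau F k"
  shows "Hnorm mu alpha beta gamma tau U \<le> C * Hnorm mu alpha beta gamma tau F"
proof -
  have sU: "summable (Hterm mu alpha beta gamma tau U)" by (rule summ_H[OF inHU])
  have sF: "summable (Hterm mu alpha beta gamma tau F)" by (rule summ_H[OF inHF])
  have "(\<Sum>k. Hterm mu alpha beta gamma tau U k) \<le> (\<Sum>k. C\<^sup>2 * Hterm mu alpha beta gamma tau F k)"
    using sU sF le by (intro suminf_le) (auto intro: summable_mult)
  also have "\<dots> = C\<^sup>2 * (\<Sum>k. Hterm mu alpha beta gamma tau F k)" using sF by (rule suminf_mult)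
  finally have "sqrt (\<Sum>k. Hterm mu alpha beta gamma tau U k) \<le> sqrt (C\<^sup>2 * (\<Sum>k. Hterm mu alpha beta gamma tau F k))"
    by (rule real_sqrt_le_mono)
  also have "\<dots> = C * sqrt (\<Sum>k. Hterm mu alpha beta gamma tau F k)" by (simp only: real_sqrt_mult real_sqrt_abs abs_of_nonneg[OF C0])
  finally show ?thesis by (simp add: Hnorm_def)
qed

theorem lemma4:
  fixes mu :: "nat \<Rightarrow> real" and alpha beta gamma kappa tau :: real
  assumes "eigen_seq mu"
    and "alpha > 0" and "beta > 0" and "gamma > 0" and "kappa > 0"
    and "0 \<le> tau" and "tau \<le> 1"
  shows "Limsup (inf at_infinity (principal {l::real. \<i> * of_real l \<in> resolvent_set mu alpha beta gamma kappa tau}))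
           (\<lambda>l. resolvent_norm mu alpha beta gamma kappa tau (\<i> * of_real l)) < \<infinity>"
proof -
  have mu0: "mu 0 > 0" and mono: "mono mu" using assms(1) by (auto simp: eigen_seq_def)
  have mk: "mu 0 \<le> mu k" for k using mono by (simp add: monoD)
  obtain C where C0: "C \<ge> 0" and CC: "\<forall>m u v th lam. m \<ge> mu 0 \<longrightarrow>
    beta * m\<^sup>2 * (cmod u)\<^sup>2 + beta * ((cmod v)\<^sup>2 + gamma * m powr tau * (cmod v)\<^sup>2) + alpha * (cmod th)\<^sup>2
    \<le> C\<^sup>2 * (beta * m\<^sup>2 * (cmod (\<i> * of_real lam * u - v))\<^sup>2
      + beta * ((cmod (\<i> * of_real lam * v - (- of_real (m\<^sup>2) * u + of_real (alpha * m) * th) / of_real (1 + gamma * m powr tau)))\<^sup>2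
         + gamma * m powr tau * (cmod (\<i> * of_real lam * v - (- of_real (m\<^sup>2) * u + of_real (alpha * m) * th) / of_real (1 + gamma * m powr tau)))\<^sup>2)
      + alpha * (cmod (\<i> * of_real lam * th - (- of_real (kappa * m) * th - of_real (beta * m) * v)))\<^sup>2)"
    using mode_bound[OF assms(2) assms(3) assms(4) assms(5) assms(6) assms(7) mu0] by blast
  have bound: "resolvent_norm mu alpha beta gamma kappa tau (\<i> * of_real l) \<le> ereal C"
    if R: "\<i> * of_real l \<in> resolvent_set mu alpha beta gamma kappa tau" for l
  proof -
    define z where "z = \<i> * complex_of_real l"
    have bij: "bij_betw (shifted mu alpha beta gamma kappa tau z) (domB mu alpha beta gamma kappa tau)
                  {F. inH mu alpha beta gamma tau F}"
      using R by (simp add: resolvent_set_def z_def)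
    show ?thesis unfolding resolvent_norm_def
    proof (rule SUP_least)
      fix F assume F: "F \<in> {F. inH mu alpha beta gamma tau F \<and> Hnorm mu alpha beta gamma tau F \<noteq> 0}"
      define U where "U = resolvent mu alpha beta gamma kappa tau (\<i> * of_real l) F"
      have inj: "inj_on (shifted mu alpha beta gamma kappa tau z) (domB mu alpha beta gamma kappa tau)"
        and img: "F \<in> shifted mu alpha beta gamma kappa tau z ` domB mu alpha beta gamma kappa tau"
        using bij F by (auto simp: bij_betw_def)
      have UD: "U \<in> domB mu alpha beta gamma kappa tau"
        unfolding U_def resolvent_def z_def[symmetric] using the_inv_into_into[OF inj img] by blast
      have sh: "shifted mu alpha beta gamma kappa tau z U = F"
        unfolding U_def resolvent_def z_def[symmetric] using f_the_inv_into_f[OF inj img] .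
      have inHU: "inH mu alpha beta gamma tau U" using UD by (simp add: domB_def)
      have inHF: "inH mu alpha beta gamma tau F" using F by simp
      obtain u v th where U: "U = (u, v, th)" by (cases U) auto
      have Feq: "F = (\<lambda>k. z * u k - v k,
          \<lambda>k. z * v k - (- of_real ((mu k)\<^sup>2) * u k + of_real (alpha * mu k) * th k) / of_real (1 + gamma * (mu k) powr tau),
          \<lambda>k. z * th k - (- of_real (kappa * mu k) * th k - of_real (beta * mu k) * v k))"
        using sh by (simp add: U shifted_def st_diff_def st_scale_def Bop_def)
      have le: "Hterm mu alpha beta gamma tau U k \<le> C\<^sup>2 * Hterm mu alpha beta gamma tau F k" for k
        using CC[rule_format, OF mk[of k], of "u k" "v k" "th k" l]
        unfolding Hterm_def U Feq z_def by simp
      have HU: "Hnorm mu alpha beta gamma tau U \<le> C * Hnorm mu alpha beta gamma tau F"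
        by (rule Hnorm_bound[OF C0 inHU inHF le])
      have "0 \<le> Hterm mu alpha beta gamma tau F k" for k
        using assms(2-4) by (cases F) (auto simp: Hterm_def intro!: add_nonneg_nonneg mult_nonneg_nonneg)
      then have "0 \<le> (\<Sum>k. Hterm mu alpha beta gamma tau F k)" by (intro suminf_nonneg summ_H[OF inHF])
      then have "Hnorm mu alpha beta gamma tau F \<ge> 0" by (simp add: Hnorm_def)
      then have Fp: "Hnorm mu alpha beta gamma tau F > 0" using F by auto
      have "Hnorm mu alpha beta gamma tau U / Hnorm mu alpha beta gamma tau F \<le> C"
        using HU Fp by (simp add: divide_le_eq)
      then show "ereal (Hnorm mu alpha beta gamma tau (resolvent mu alpha beta gamma kappa tau (\<i> * of_real l) F)
               / Hnorm mu alpha beta gamma tau F) \<le> ereal C"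
        by (simp add: U_def[symmetric])
    qed
  qed
  have "Limsup (inf at_infinity (principal {l::real. \<i> * of_real l \<in> resolvent_set mu alpha beta gamma kappa tau}))
           (\<lambda>l. resolvent_norm mu alpha beta gamma kappa tau (\<i> * of_real l)) \<le> ereal C"
    by (rule Limsup_bounded) (simp add: eventually_inf_principal bound)
  then show ?thesis by (auto simp: le_less_trans)
qed

end
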